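(* Let $T$ be a p-string of length $n$ and let $1\le i\le j\le n$. If $\mathrm{prev}(T[i..j])$ is represented by $\mathrm{PPH}(T)$, then $\mathrm{prev}(X)$ is represented by $\mathrm{PPH}(T)$ for every substring $X$ of $T[i..j]$.
   Context: Let $\Sigma$ and $\Pi$ be disjoint alphabets. A p-string is a finite string over $\Sigma\cup\Pi$. For a string $S$, $S[i]$ is its $i$-th character, $S[i..j]$ is the substring from position $i$ to $j$ (empty if $j<i$), and $S[i..]=S[i..|S|]$. The previous encoding $\mathrm{prev}(S)$ of a p-string $S$ of length $n$ is the sequence of length $n$ defined by: - $\mathrm{prev}(S)[i]=S[i]$ if $S[i]\in\Sigma$; - $\mathrm{prev}(S)[i]=0$ if $S[i]\in\Pi$ does not occur in $S[1..i-1]$; - $\mathrm{prev}(S)[i]=i-j$ otherwise, where $j<i$ is the largest position with $S[j]=S[i]$. Sequence hash tree. Let $\langle S_1,\ldots,S_k\rangle$ be a sequence of strings with $S_1=\varepsilon$ and with $S_i$ not a prefix of $S_j$ for any $j<i$. Its sequence hash tree is built as follows. Start from a root representing $\varepsilon$. For $i=2,\ldots,k$, insert as a new node the shortest prefix $p_i$ of $S_i$ that is not yet a node. Attach it as a child of the longest prefix $q_i$ of $S_i$ that is already a node, via an edge labeled $S_i[|q_i|+1]$. The parameterized position heap $\mathrm{PPH}(T)$ is the sequence hash tree of $\langle\varepsilon,\mathrm{prev}(T[n..]),\ldots,\mathrm{prev}(T[1..])\rangle$. A sequence $P$ over $\Sigma\cup\{0,\ldots,n-1\}$ is represented by $\mathrm{PPH}(T)$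 if $\mathrm{PPH}(T)$ has a path starting at the root whose edge labels spell out $P$. *)

theory Defs
  imports Main
begin

text \<open>A p-string over disjoint alphabets Sigma ('s) and Pi ('p): characters are
  Inl a (static symbol) or Inr x (parameter symbol). Lists are 0-indexed.\<close>
type_synonym ('s,'p) pstring = "('s + 'p) list"

text \<open>Substring S[i..j] with 1-based positions (empty if j < i).\<close>
definition substr :: "'a list \<Rightarrow> nat \<Rightarrow> nat \<Rightarrow> 'a list" where
  "substr S i j = take (Suc j - i) (drop (i - 1) S)"

definition prev :: "('s,'p) pstring \<Rightarrow> ('s + nat) list" where
  "prev S = map (\<lambda>i. case S ! i of
       Inl a \<Rightarrow> Inl a
     | Inr x \<Rightarrow> (if Inr x \<notin> set (take i S) then Inr 0
                else Inr (i - Max {j. j < i \<and> S ! j = S ! i})))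
     [0..<length S]"

text \<open>Sequence hash tree as (nodes, labelled edges (parent, label, child)).\<close>
definition sht_insert :: "('a list set \<times> ('a list \<times> 'a \<times> 'a list) set) \<Rightarrow> 'a list
     \<Rightarrow> ('a list set \<times> ('a list \<times> 'a \<times> 'a list) set)" where
  "sht_insert NE S =
     (let N = fst NE; E = snd NE;
          p = take (LEAST k. take k S \<notin> N) S;
          q = take (GREATEST k. k \<le> length S \<and> take k S \<in> N) S
      in (insert p N, insert (q, S ! length q, p) E))"

text \<open>Sequence hash tree of \<langle>\<epsilon>, S_2, ..., S_k\<rangle>; the argument is the list [S_2,...,S_k].\<close>
definition sht :: "'a list list \<Rightarrow> ('a list set \<times> ('a list \<times> 'a \<times> 'a list) set)" where
  "sht Ss = fold (\<lambda>S NE. sht_insert NE S) Ss ({[]}, {})"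

definition PPH :: "('s,'p) pstring \<Rightarrow> (('s + nat) list set \<times> (('s + nat) list \<times> ('s + nat) \<times> ('s + nat) list) set)" where
  "PPH T = sht (map (\<lambda>k. prev (substr T k (length T))) (rev [1..<Suc (length T)]))"

inductive tree_path :: "('a list \<times> 'a \<times> 'a list) set \<Rightarrow> 'a list \<Rightarrow> 'a list \<Rightarrow> 'a list \<Rightarrow> bool"
  for E where
  nil: "tree_path E u [] u"
| cons: "(u, c, v) \<in> E \<Longrightarrow> tree_path E v w x \<Longrightarrow> tree_path E u (c # w) x"

definition represented :: "'a list \<Rightarrow> ('a list set \<times> ('a list \<times> 'a \<times> 'a list) set) \<Rightarrow> bool" where
  "represented P H = (\<exists>v. tree_path (snd H) [] P v)"

end

theory Submission
  imports Defs
begin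

definition good :: "('a list \<Rightarrow> 'a list) \<Rightarrow> nat \<Rightarrow> ('a list set \<times> ('a list \<times> 'a \<times> 'a list) set) \<Rightarrow> bool" where
  "good f n H = ([] \<in> fst H \<and> (\<forall>x\<in>fst H. \<forall>k. take k x \<in> fst H) \<and> (\<forall>x\<in>fst H. f x \<in> fst H)
     \<and> (\<forall>x\<in>fst H. length x \<le> n) \<and> (\<forall>(u,c,v)\<in>snd H. v = u @ [c] \<and> v \<in> fst H)
     \<and> (\<forall>v\<in>fst H. v \<noteq> [] \<longrightarrow> (butlast v, last v, v) \<in> snd H))"

definition chain :: "('a list \<Rightarrow> 'a list) \<Rightarrow> 'a list list \<Rightarrow> bool" where
  "chain f ys = (\<forall>k<length ys. length (ys!k) = Suc k \<and> (0 < k \<longrightarrow> f (ys!k) = ys!(k-1)))"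

lemma ins:
  assumes N0: "[] \<in> N" and pc: "\<forall>x\<in>N. \<forall>k. take k x \<in> N" and yN: "y \<notin> N"
    and m: "m = (LEAST k. take k y \<notin> N)"
  shows "0 < m" "m \<le> length y" "\<forall>k<m. take k y \<in> N" "take m y \<notin> N"
    "sht_insert (N,E) y = (insert (take m y) N, insert (take (m-1) y, y!(m-1), take m y) E)"
proof -
  have ex: "take (length y) y \<notin> N" using yN by simp
  show m1: "take m y \<notin> N" unfolding m by (rule LeastI, rule ex)
  show m2: "m \<le> length y" unfolding m by (rule Least_le, rule ex)
  show m3: "\<forall>k<m. take k y \<in> N" unfolding m using not_less_Least by blast
  show m0: "0 < m" using m1 N0 by (cases m) auto
  have g: "(GREATEST k. k \<le> length y \<and> take k y \<in> N) = m - 1"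
  proof (rule Greatest_equality)
    show "m - 1 \<le> length y \<and> take (m - 1) y \<in> N" using m2 m3 m0 by auto
  next
    fix k assume "k \<le> length y \<and> take k y \<in> N"
    then show "k \<le> m - 1" using pc m1 
      by (metis Suc_pred' m0 not_less_eq_eq take_take min_def)
  qed
  have l: "length (take (m-1) y) = m - 1" using m2 by simp
  show "sht_insert (N,E) y = (insert (take m y) N, insert (take (m-1) y, y!(m-1), take m y) E)"
    unfolding sht_insert_def Let_def using g l m by simp
qed

lemma sht_snoc: "sht (ys @ [y]) = sht_insert (sht ys) y"
  unfolding sht_def by simp

lemma chain_butlast: "chain f (ys @ [y]) \<Longrightarrow> chain f ys"
  unfolding chain_def
proof (intro allI impI)
  fix k assume A: "\<forall>k<length (ys @ [y]). length ((ys @ [y]) ! k) = Suc k \<and> (0 < k \<longrightarrow> f ((ys @ [y]) ! k) = (ys @ [y]) ! (k - 1))"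
    and k: "k < length ys"
  then have "k < length (ys @ [y])" by simp
  note B = A[rule_format, OF this]
  have "k - 1 < length ys" using k by simp
  then show "length (ys ! k) = Suc k \<and> (0 < k \<longrightarrow> f (ys ! k) = ys ! (k - 1))"
    using B k by (simp add: nth_append)
qed

lemma inv:
  assumes ftake: "\<And>k x. f (take k x) = take (k - 1) (f x)"
  shows "chain f ys \<Longrightarrow> good f (length ys) (sht ys) \<and> (ys \<noteq> [] \<longrightarrow> good f (length ys - 1) (sht (butlast ys)))"
proof (induction ys rule: rev_induct)
  case Nil
  have "f [] = []" using ftake[of 0 "[]"] by simp
  then show ?case unfolding good_def sht_def by auto
next
  case (snoc y ys)
  have ch: "chain f ys" using snoc.prems chain_butlast by blast
  have G: "good f (length ys) (sht ys)" using snoc.IH ch by blast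
  obtain N E where NE: "sht ys = (N,E)" by (cases "sht ys")
  have "length ys < length (ys @ [y])" by simp
  from snoc.prems[unfolded chain_def, rule_format, OF this]
  have ly: "length y = Suc (length ys)" by simp
  have N0: "[] \<in> N" and pc: "\<forall>x\<in>N. \<forall>k. take k x \<in> N" and fc: "\<forall>x\<in>N. f x \<in> N"
    and lN: "\<forall>x\<in>N. length x \<le> length ys" and eE: "\<forall>(u,c,v)\<in>E. v = u @ [c] \<and> v \<in> N"
    and eN: "\<forall>v\<in>N. v \<noteq> [] \<longrightarrow> (butlast v, last v, v) \<in> E"
    using G NE unfolding good_def by auto
  have yN: "y \<notin> N" using lN ly by fastforce
  define m where "m = (LEAST k. take k y \<notin> N)"
  note I = ins[OF N0 pc yN m_def]
  note I5 = ins(5)[OF N0 pc yN m_def, of E]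
  have pq: "take m y = take (m-1) y @ [y!(m-1)]"
    using I(1,2) take_Suc_conv_app_nth[of "m-1" y] by simp
  have fp: "f (take m y) \<in> N"
  proof (cases "ys = []")
    case True
    then have "length y = 1" using ly by simp
    then have "f y = []" using ftake[of 1 y] by simp
    then show ?thesis using ftake[of m y] N0 by simp
  next
    case False
    then obtain zs z where zs: "ys = zs @ [z]" by (cases ys rule: rev_cases) auto
    have fy: "f y = z" using snoc.prems unfolding chain_def zs
      by (auto simp: nth_append)
    have G0: "good f (length zs) (sht zs)" using snoc.IH ch zs by simp
    obtain N0' E0 where NE0: "sht zs = (N0',E0)" by (cases "sht zs")
    have N00: "[] \<in> N0'" and pc0: "\<forall>x\<in>N0'. \<forall>k. take k x \<in> N0'" and fc0: "\<forall>x\<in>N0'. f x \<in> N0'"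
      and lN0: "\<forall>x\<in>N0'. length x \<le> length zs"
      using G0 NE0 unfolding good_def by auto
    have "length zs < length (zs @ [z])" by simp
    from ch[unfolded chain_def zs, rule_format, OF this]
    have lz: "length z = Suc (length zs)" by simp
    have zN: "z \<notin> N0'" using lN0 lz by fastforce
    define m' where "m' = (LEAST k. take k z \<notin> N0')"
    note J = ins[OF N00 pc0 zN m'_def]
    note J5 = ins(5)[OF N00 pc0 zN m'_def, of E0]
    have "sht ys = sht_insert (N0',E0) z" by (simp add: zs NE0 sht_snoc)
    then have Neq: "N = insert (take m' z) N0'" using NE J5 by simp
    have "take (m-1) z \<in> N"
    proof (rule ccontr)
      assume nz: "take (m-1) z \<notin> N"
      have "\<forall>k\<le>m'. take k z \<in> N"
      proof (intro allI impI)
        fix k assume "k \<le> m'"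
        then show "take k z \<in> N"
        proof (cases "k = m'")
          case True then show ?thesis using Neq by simp
        next
          case False then have "k < m'" using \<open>k \<le> m'\<close> by simp
          then show ?thesis using J(3) Neq by simp
        qed
      qed
      then have "\<not> m - 1 \<le> m'" using nz by blast
      then have lt: "Suc m' < m" by arith
      have "take (Suc m') y \<in> N" using I(3) lt by blast
      moreover have "length (take (Suc m') y) = Suc m'" using lt I(2) by simp
      moreover have "length (take m' z) = m'" using J(2) by simp
      ultimately have "take (Suc m') y \<in> N0'" using Neq by force
      then have "f (take (Suc m') y) \<in> N0'" using fc0 by blast
      then have "take m' z \<in> N0'" using ftake[of "Suc m'" y] fy by simp
      then show False using J(4) by blast
    qed
    then show ?thesis using ftake[of m y] fy by simp
  qed
  have new: "sht (ys @ [y]) = (insert (take m y) N, insert (take (m-1) y, y!(m-1), take m y) E)"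
    by (simp add: sht_snoc NE I5)
  have "good f (length (ys @ [y])) (sht (ys @ [y]))"
    unfolding new good_def fst_conv snd_conv
  proof (intro conjI)
    show "[] \<in> insert (take m y) N" using N0 by simp
    show "\<forall>x\<in>insert (take m y) N. \<forall>k. take k x \<in> insert (take m y) N"
    proof (intro ballI allI)
      fix x k assume x: "x \<in> insert (take m y) N"
      show "take k x \<in> insert (take m y) N"
      proof (cases "x = take m y")
        case True
        show ?thesis
        proof (cases "k < m")
          case True
          then show ?thesis using I(3) \<open>x = take m y\<close> by simp
        next
          case False
          then show ?thesis using \<open>x = take m y\<close> by (simp add: min_def)
        qed
      next
        case False
        then show ?thesis using x pc by blast
      qed
    qed
    show "\<forall>x\<in>insert (take m y) N. f x \<in> insert (take m y) N" using fc fp by auto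
    show "\<forall>x\<in>insert (take m y) N. length x \<le> length (ys @ [y])" using lN ly by fastforce
    show "\<forall>(u, c, v)\<in>insert (take (m - 1) y, y ! (m - 1), take m y) E. v = u @ [c] \<and> v \<in> insert (take m y) N"
      using eE pq by auto
    show "\<forall>v\<in>insert (take m y) N. v \<noteq> [] \<longrightarrow> (butlast v, last v, v) \<in> insert (take (m - 1) y, y ! (m - 1), take m y) E"
    proof (intro ballI impI)
      fix v assume v: "v \<in> insert (take m y) N" "v \<noteq> []"
      show "(butlast v, last v, v) \<in> insert (take (m - 1) y, y ! (m - 1), take m y) E"
      proof (cases "v = take m y")
        case True
        then show ?thesis by (simp add: pq)
      next
        case False
        then show ?thesis using v eN by blast
      qed
    qed
  qed
  then show ?case using G by simp
qed

lemma path_sound: "tree_path E u w x \<Longrightarrow> \<forall>(u,c,v)\<in>E. v = u @ [c] \<and> v \<in> N \<Longrightarrow> u \<in> N \<Longrightarrow> x = u @ w \<and> x \<in> N"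
  by (induction rule: tree_path.induct) auto

lemma path_complete: "u @ w \<in> N \<Longrightarrow> \<forall>x\<in>N. \<forall>k. take k x \<in> N \<Longrightarrow>
   \<forall>v\<in>N. v \<noteq> [] \<longrightarrow> (butlast v, last v, v) \<in> E \<Longrightarrow> tree_path E u w (u @ w)"
proof (induction w arbitrary: u)
  case Nil then show ?case by (simp add: tree_path.nil)
next
  case (Cons c w)
  have "take (Suc (length u)) (u @ c # w) \<in> N" using Cons.prems by blast
  then have "u @ [c] \<in> N" by simp
  then have e: "(u, c, u @ [c]) \<in> E" using Cons.prems(3) by fastforce
  have "(u @ [c]) @ w \<in> N" using Cons.prems by simp
  then have "tree_path E (u @ [c]) w ((u @ [c]) @ w)" using Cons.IH Cons.prems by blast
  then show ?case using e tree_path.cons by fastforce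
qed

lemma represented_iff: "good f n H \<Longrightarrow> represented P H \<longleftrightarrow> P \<in> fst H"
  unfolding represented_def good_def
  using path_sound[of "snd H" "[]" P _ "fst H"] path_complete[of "[]" P "fst H" "snd H"]
  by auto

definition ptl :: "('s + nat) list \<Rightarrow> ('s + nat) list" where
  "ptl x = map (\<lambda>i. case x ! Suc i of Inl a \<Rightarrow> Inl a | Inr d \<Rightarrow> Inr (if d = Suc i then 0 else d)) [0..<length x - 1]"

lemma ptl_length[simp]: "length (ptl x) = length x - 1"
  by (simp add: ptl_def)

lemma ptl_nth: "i < length x - 1 \<Longrightarrow> ptl x ! i = (case x ! Suc i of Inl a \<Rightarrow> Inl a | Inr d \<Rightarrow> Inr (if d = Suc i then 0 else d))"
  by (simp add: ptl_def split: sum.split)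

lemma ptl_take: "ptl (take k x) = take (k - 1) (ptl x)"
proof (rule nth_equalityI)
  show "length (ptl (take k x)) = length (take (k - 1) (ptl x))" by (simp add: min_def)
  fix i assume "i < length (ptl (take k x))"
  then have a: "Suc i < k" "Suc i < length x" by auto
  then show "ptl (take k x) ! i = take (k - 1) (ptl x) ! i" by (simp add: ptl_nth)
qed

lemma prev_length[simp]: "length (prev S) = length S"
  by (simp add: prev_def)

lemma prev_nth: "i < length S \<Longrightarrow> prev S ! i = (case S ! i of Inl a \<Rightarrow> Inl a
   | Inr x \<Rightarrow> (if \<exists>j<i. S ! j = S ! i then Inr (i - Max {j. j < i \<and> S ! j = S ! i}) else Inr 0))"
proof -
  assume i: "i < length S"
  have e: "Inr x \<in> set (take i S) \<longleftrightarrow> (\<exists>j<i. S ! j = Inr x)" for x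
    using i by (auto simp: in_set_conv_nth)
  show ?thesis using i e by (simp add: prev_def split: sum.split)
qed

lemma prev_take: "prev (take b S) = take b (prev S)"
proof (rule nth_equalityI)
  show "length (prev (take b S)) = length (take b (prev S))" by simp
next
  fix i assume "i < length (prev (take b S))"
  then have i: "i < b" "i < length S" by auto
  have a: "\<forall>j\<le>i. take b S ! j = S ! j" using i by simp
  have e1: "take b S ! i = S ! i" using i by simp
  have c: "{j. j < i \<and> take b S ! j = S ! i} = {j. j < i \<and> S ! j = S ! i}"
    using a by auto
  have d: "(\<exists>j<i. take b S ! j = S ! i) = (\<exists>j<i. S ! j = S ! i)" using a by auto
  have "prev (take b S) ! i = (case take b S ! i of Inl a \<Rightarrow> Inl a
   | Inr x \<Rightarrow> (if \<exists>j<i. take b S ! j = take b S ! i then Inr (i - Max {j. j < i \<and> take b S ! j = take b S ! i}) else Inr 0))"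
    using i by (intro prev_nth) simp
  also have "\<dots> = (case S ! i of Inl a \<Rightarrow> Inl a
   | Inr x \<Rightarrow> (if \<exists>j<i. S ! j = S ! i then Inr (i - Max {j. j < i \<and> S ! j = S ! i}) else Inr 0))"
    by (simp only: e1 c d)
  also have "\<dots> = prev S ! i" using i by (intro prev_nth[symmetric])
  finally show "prev (take b S) ! i = take b (prev S) ! i" using i by simp
qed

lemma max_shift:
  assumes "B = {j. j < i \<and> P (Suc j)}" "A = {j. j < Suc i \<and> P j}" "B \<noteq> {}"
  shows "Max A = Suc (Max B)"
proof (rule Max_eqI)
  show "finite A" using assms by simp
  have fB: "finite B" using assms by simp
  have "Max B \<in> B" using Max_in[OF fB assms(3)] .
  then show "Suc (Max B) \<in> A" using assms by auto
  fix y assume y: "y \<in> A"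
  show "y \<le> Suc (Max B)"
  proof (cases y)
    case 0 then show ?thesis by simp
  next
    case (Suc b)
    then have "b \<in> B" using y assms by auto
    then show ?thesis using Max_ge[OF fB] Suc by auto
  qed
qed

lemma prev_tl: "prev (tl S) = ptl (prev S)"
proof (rule nth_equalityI)
  show "length (prev (tl S)) = length (ptl (prev S))" by (simp add: ptl_def)
next
  fix i assume "i < length (prev (tl S))"
  then have i: "Suc i < length S" by simp
  then obtain c S' where S: "S = c # S'" by (cases S) auto
  have i': "i < length S'" using i S by simp
  define B where "B = {j. j < i \<and> S' ! j = S' ! i}"
  define A where "A = {j. j < Suc i \<and> (c # S') ! j = S' ! i}"
  have L: "prev (tl S) ! i = (case S' ! i of Inl a \<Rightarrow> Inl a
   | Inr x \<Rightarrow> (if \<exists>j<i. S' ! j = S' ! i then Inr (i - Max B) else Inr 0))"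
    using i' unfolding B_def by (simp add: prev_nth S)
  have R: "ptl (prev S) ! i = (case S' ! i of Inl a \<Rightarrow> Inl a
   | Inr x \<Rightarrow> Inr (let d = (if \<exists>j<Suc i. (c # S') ! j = S' ! i then Suc i - Max A else 0) in
              if d = Suc i then 0 else d))"
  proof -
    have "ptl (prev S) ! i = (case prev S ! Suc i of Inl a \<Rightarrow> Inl a | Inr d \<Rightarrow> Inr (if d = Suc i then 0 else d))"
      using i by (simp add: ptl_nth)
    also have "prev S ! Suc i = (case S' ! i of Inl a \<Rightarrow> Inl a
      | Inr x \<Rightarrow> (if \<exists>j<Suc i. (c # S') ! j = S' ! i then Inr (Suc i - Max A) else Inr 0))"
      using prev_nth[OF i, unfolded S nth_Cons_Suc] unfolding A_def by (simp add: S)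
    finally show ?thesis by (cases "S' ! i") (auto simp: Let_def)
  qed
  show "prev (tl S) ! i = ptl (prev S) ! i"
  proof (cases "\<exists>j<i. S' ! j = S' ! i")
    case True
    then have Bne: "B \<noteq> {}" unfolding B_def by auto
    have M: "Max A = Suc (Max B)"
    proof (rule max_shift[of B i "\<lambda>j. (c # S') ! j = S' ! i" A])
      show "B = {j. j < i \<and> (c # S') ! Suc j = S' ! i}" by (simp add: B_def)
      show "A = {j. j < Suc i \<and> (c # S') ! j = S' ! i}" by (simp add: A_def)
      show "B \<noteq> {}" by (rule Bne)
    qed
    have fB: "finite B" unfolding B_def by simp
    have "Max B < i" using Max_in[OF fB Bne] unfolding B_def by auto
    moreover have "\<exists>j<Suc i. (c # S') ! j = S' ! i" using True by (metis nth_Cons_Suc Suc_mono)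
    ultimately show ?thesis using L R M True by (cases "S' ! i") (auto simp: Let_def)
  next
    case False
    have "Suc i - Max A = Suc i" if ex: "\<exists>j<Suc i. (c # S') ! j = S' ! i"
    proof -
      have "A \<subseteq> {0}" unfolding A_def using False
        by (auto simp: less_Suc_eq_0_disj)
      moreover have "A \<noteq> {}" using ex unfolding A_def by auto
      ultimately have "A = {0}" by blast
      then show ?thesis by simp
    qed
    then show ?thesis using L R False by (cases "S' ! i") (auto simp: Let_def)
  qed
qed

lemma prev_drop: "prev (drop a S) = (ptl ^^ a) (prev S)"
proof (induction a arbitrary: S)
  case 0 then show ?case by simp
next
  case (Suc a)
  have "prev (drop (Suc a) S) = prev (drop a (tl S))" by (simp add: drop_Suc)
  also have "\<dots> = (ptl ^^ a) (prev (tl S))" using Suc.IH .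
  also have "\<dots> = (ptl ^^ Suc a) (prev S)" by (simp add: prev_tl funpow_Suc_right del: funpow.simps)
  finally show ?case .
qed

lemma substr_suffix: "substr T k (length T) = drop (k - 1) T"
  unfolding substr_def by simp

theorem lemma2:
  fixes T :: "('s,'p) pstring" and i j :: nat
  assumes "1 \<le> i" and "i \<le> j" and "j \<le> length T"
    and "represented (prev (substr T i j)) (PPH T)"
  shows "\<forall>X. (\<exists>u v. substr T i j = u @ X @ v) \<longrightarrow> represented (prev X) (PPH T)"
proof (intro allI impI)
  fix X assume "\<exists>u v. substr T i j = u @ X @ v"
  then obtain u v where uv: "substr T i j = u @ X @ v" by blast
  define n where "n = length T"
  define ys where "ys = map (\<lambda>k. prev (substr T k (length T))) (rev [1..<Suc (length T)])"
  have ysk: "ys ! k = prev (drop (n - Suc k) T)" if "k < n" for k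
  proof -
    have "rev [1..<Suc n] ! k = [1..<Suc n] ! (length [1..<Suc n] - Suc k)"
      using that by (intro rev_nth) simp
    also have "\<dots> = n - k" using that by (simp del: upt_Suc)
    finally have "rev [1..<Suc n] ! k = n - k" .
    moreover have "ys ! k = prev (substr T (rev [1..<Suc n] ! k) (length T))"
      using that unfolding ys_def n_def by (simp del: upt_Suc)
    ultimately show ?thesis using that by (simp add: substr_suffix)
  qed
  have ly: "length ys = n" unfolding ys_def n_def by (simp del: upt_Suc)
  have ch: "chain ptl ys" unfolding chain_def
  proof (intro allI impI conjI)
    fix k assume k: "k < length ys"
    then show "length (ys ! k) = Suc k" using ysk ly by (simp add: n_def)
  next
    fix k assume k: "k < length ys" and "0 < k"
    then have nk: "n - k = Suc (n - Suc k)" using k ly by simp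
    then show "ptl (ys ! k) = ys ! (k - 1)"
      using k ly ysk[of k] ysk[of "k-1"] \<open>0 < k\<close> by (simp add: prev_tl[symmetric] tl_drop nk drop_Suc)
  qed
  have G: "good ptl (length ys) (sht ys)"
    using inv[of ptl ys, OF ptl_take ch] by simp
  have P: "PPH T = sht ys" by (simp add: PPH_def ys_def)
  have G': "good ptl (length ys) (PPH T)" using G P by simp
  let ?S = "substr T i j"
  have inS: "prev ?S \<in> fst (PPH T)" using assms(4) represented_iff[OF G'] by blast
  have fc: "\<forall>x\<in>fst (PPH T). ptl x \<in> fst (PPH T)" and pc: "\<forall>x\<in>fst (PPH T). \<forall>k. take k x \<in> fst (PPH T)"
    using G' unfolding good_def by auto
  have fca: "(ptl ^^ a) x \<in> fst (PPH T)" if "x \<in> fst (PPH T)" for a x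
    using that fc by (induction a) auto
  have "X = take (length X) (drop (length u) ?S)" using uv by simp
  then have "prev X = take (length X) ((ptl ^^ length u) (prev ?S))"
    by (metis prev_take prev_drop)
  then have "prev X \<in> fst (PPH T)" using fca[OF inS] pc by simp
  then show "represented (prev X) (PPH T)" using represented_iff[OF G'] by blast
qed

end
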